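(* Let $\mathcal F\subseteq\mathcal F_0$ be finite with $r(\mathcal F)\le\max\{(2\sqrt e)^{-1}(\Delta\kappa e)^{-\Delta/2},\,0.2058(\kappa+1)^{-\Delta}\}$. Let $G$ be a finite graph of maximum degree $\Delta$ and $\pi\colon V(G)\to\mathcal F$. Then $Z_{\mathcal F}(G,\pi)\neq0$, and, writing $P(t)=\sum_{\sigma\in D^{E}}\prod_vf_v(\sigma|_{E(v)})\,t^{|\{e:\sigma(e)\neq0\}|}/\prod_vf_v(\mathbf 0)$ (so $P(0)=1$ and $P(1)=Z_{\mathcal F}(G,\pi)/\prod_vf_v(\mathbf0)$), the Taylor series of $\log P(t)$ about $t=0$ converges absolutely at $t=1$.
   Context: $D=\{0,\dots,\kappa\}$; signatures $f\colon D^d\to\mathbb C$; $\mathcal F_0=\{f\mid f(\mathbf0)\neq0\}$; $r(f)=\max_{x\in D^d\setminus\{\mathbf0\}}|f(x)|/|f(\mathbf0)|$, $r(\mathcal F)=\max_{f\in\mathcal F}r(f)$. $G=(V,E)$ with fixed order on $E$, $E(v)$ the edges at $v$, $\pi$ assigns $f_v$ of arity $|E(v)|$; the Holant problem is $Z_{\mathcal F}(G,\pi)=\sum_{\sigma\in D^E}\prod_vf_v(\sigma|_{E(v)})$. *)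

theory Defs
  imports "HOL-Analysis.Analysis"
begin

text \<open>Domain D = {0..kappa}. A signature is a pair (d, f) of an arity d and a function
  on d-tuples (lists of length d) over D.\<close>

type_synonym signature = "nat \<times> (nat list \<Rightarrow> complex)"

definition tuples :: "nat \<Rightarrow> nat \<Rightarrow> nat list set" where
  "tuples \<kappa> d = {xs. length xs = d \<and> set xs \<subseteq> {0..\<kappa>}}"

definition arity :: "signature \<Rightarrow> nat" where "arity s = fst s"
definition sfun :: "signature \<Rightarrow> nat list \<Rightarrow> complex" where "sfun s = snd s"

definition zero_tuple :: "signature \<Rightarrow> nat list" where
  "zero_tuple s = replicate (arity s) 0"

definition F0 :: "signature set" where
  "F0 = {s. sfun s (zero_tuple s) \<noteq> 0}"

definition r_sig :: "nat \<Rightarrow> signature \<Rightarrow> real" where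
  "r_sig \<kappa> s = Max (insert 0
     ((\<lambda>x. cmod (sfun s x) / cmod (sfun s (zero_tuple s))) ` (tuples \<kappa> (arity s) - {zero_tuple s})))"

definition r_set :: "nat \<Rightarrow> signature set \<Rightarrow> real" where
  "r_set \<kappa> F = Max (insert 0 (r_sig \<kappa> ` F))"

text \<open>Graphs: vertex set V, edge set E, endpoint map ends (multigraph, no loops).\<close>
definition graph :: "'v set \<Rightarrow> 'e set \<Rightarrow> ('e \<Rightarrow> 'v set) \<Rightarrow> bool" where
  "graph V E ends \<longleftrightarrow> finite V \<and> finite E \<and> (\<forall>e\<in>E. ends e \<subseteq> V \<and> card (ends e) = 2)"

definition incident :: "'e set \<Rightarrow> ('e \<Rightarrow> 'v set) \<Rightarrow> 'v \<Rightarrow> 'e set" where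
  "incident E ends v = {e\<in>E. v \<in> ends e}"

definition restr :: "'e set \<Rightarrow> ('e \<Rightarrow> 'v set) \<Rightarrow> ('e::linorder \<Rightarrow> nat) \<Rightarrow> 'v \<Rightarrow> nat list" where
  "restr E ends \<sigma> v = map \<sigma> (sorted_list_of_set (incident E ends v))"

definition assignments :: "nat \<Rightarrow> 'e set \<Rightarrow> ('e \<Rightarrow> nat) set" where
  "assignments \<kappa> E = PiE E (\<lambda>_. {0..\<kappa>})"

definition weight :: "'v set \<Rightarrow> 'e set \<Rightarrow> ('e \<Rightarrow> 'v set) \<Rightarrow> ('v \<Rightarrow> signature)
    \<Rightarrow> ('e::linorder \<Rightarrow> nat) \<Rightarrow> complex" where
  "weight V E ends \<pi> \<sigma> = (\<Prod>v\<in>V. sfun (\<pi> v) (restr E ends \<sigma> v))"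

definition holant :: "nat \<Rightarrow> 'v set \<Rightarrow> 'e::linorder set \<Rightarrow> ('e \<Rightarrow> 'v set) \<Rightarrow> ('v \<Rightarrow> signature) \<Rightarrow> complex" where
  "holant \<kappa> V E ends \<pi> = (\<Sum>\<sigma>\<in>assignments \<kappa> E. weight V E ends \<pi> \<sigma>)"

definition holant_poly :: "nat \<Rightarrow> 'v set \<Rightarrow> 'e::linorder set \<Rightarrow> ('e \<Rightarrow> 'v set) \<Rightarrow> ('v \<Rightarrow> signature)
    \<Rightarrow> complex \<Rightarrow> complex" where
  "holant_poly \<kappa> V E ends \<pi> t =
     (\<Sum>\<sigma>\<in>assignments \<kappa> E. weight V E ends \<pi> \<sigma> * t ^ card {e\<in>E. \<sigma> e \<noteq> 0})
     / (\<Prod>v\<in>V. sfun (\<pi> v) (zero_tuple (\<pi> v)))"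

definition taylor_coeff :: "(complex \<Rightarrow> complex) \<Rightarrow> nat \<Rightarrow> complex" where
  "taylor_coeff g n = (deriv ^^ n) g 0 / of_nat (fact n)"

end

theory Submission
  imports Defs "HOL-Complex_Analysis.Complex_Analysis"
begin

lemma analytic_part:
  fixes P :: "complex \<Rightarrow> complex" and s :: real
  assumes holP: "P holomorphic_on UNIV" and s1: "s > 1"
    and nz: "\<forall>t. cmod t \<le> s \<longrightarrow> P t \<noteq> 0" and P0: "P 0 = 1"
  shows "summable (\<lambda>n. norm ((deriv ^^ n) (\<lambda>t. Ln (P t)) 0 / of_nat (fact n)))"
proof -
  have "P holomorphic_on ball 0 s" using holP by (rule holomorphic_on_subset) auto
  moreover have "contractible (ball (0::complex) s)" by (simp add: convex_imp_contractible)
  moreover have "\<And>z. z \<in> ball 0 s \<Longrightarrow> P z \<noteq> 0" using nz by auto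
  ultimately obtain g where gh: "g holomorphic_on ball 0 s" and gP: "\<And>z. z \<in> ball 0 s \<Longrightarrow> P z = exp (g z)"
    using contractible_imp_holomorphic_log by blast
  define g' where "g' = (\<lambda>z. g z - g 0)"
  have s0: "(0::complex) \<in> ball 0 s" using s1 by auto
  have eg0: "exp (g 0) = 1" using gP[OF s0] P0 by simp
  have g'P: "P z = exp (g' z)" if "z \<in> ball 0 s" for z
    using gP[OF that] eg0 by (simp add: g'_def exp_diff)
  have g'h: "g' holomorphic_on ball 0 s" unfolding g'_def using gh by (intro holomorphic_intros)
  have "continuous (at 0) g'"
    using holomorphic_on_imp_continuous_on[OF g'h] s0 by (simp add: continuous_on_eq_continuous_at)
  moreover have "g' 0 = 0" by (simp add: g'_def)
  ultimately obtain d where d0: "d > 0" and dd: "\<And>x. dist x 0 < d \<Longrightarrow> dist (g' x) 0 < pi"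
    unfolding continuous_at_eps_delta using pi_gt_zero by metis
  define d' where "d' = min d s"
  have d'0: "d' > 0" using d0 s1 by (simp add: d'_def)
  have eqL: "Ln (P z) = g' z" if "z \<in> ball 0 d'" for z
  proof -
    have "z \<in> ball 0 s" using that by (auto simp: d'_def)
    moreover have "cmod (g' z) < pi" using dd[of z] that by (auto simp: d'_def dist_norm)
    hence "\<bar>Im (g' z)\<bar> < pi" using abs_Im_le_cmod[of "g' z"] by linarith
    ultimately show ?thesis using g'P by (simp add: Ln_exp)
  qed
  have g'h': "g' holomorphic_on ball 0 d'" using g'h by (rule holomorphic_on_subset) (auto simp: d'_def)
  have Lh: "(\<lambda>t. Ln (P t)) holomorphic_on ball 0 d'"
    using holomorphic_transform[OF g'h'] eqL by auto
  have deq: "(deriv ^^ n) (\<lambda>t. Ln (P t)) 0 = (deriv ^^ n) g' 0" for n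
    by (rule higher_deriv_transform_within_open[OF Lh g'h']) (use d'0 eqL in auto)
  define w :: complex where "w = of_real ((1 + s) / 2)"
  have nw: "norm w = (1 + s) / 2" unfolding w_def norm_of_real using s1 by simp
  have wb: "w \<in> ball 0 s" using s1 nw by simp
  have "(\<lambda>n. (deriv ^^ n) g' 0 / (fact n) * (w - 0)^n) sums g' w"
    by (rule holomorphic_power_series[OF g'h wb])
  hence "summable (\<lambda>n. (deriv ^^ n) g' 0 / (fact n) * w^n)" by (simp add: sums_summable)
  moreover have "norm (1::complex) < norm w" using s1 nw by simp
  ultimately have "summable (\<lambda>n. norm ((deriv ^^ n) g' 0 / (fact n) * 1 ^ n))"
    by (rule powser_insidea)
  thus ?thesis by (simp add: deq)
qed

lemma K_exists:
  fixes R :: real and \<kappa> \<Delta> :: nat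
  assumes R0: "0 \<le> R"
    and Rle: "R \<le> max (inverse (2 * sqrt (exp 1)) * inverse (sqrt ((real \<Delta> * real \<kappa> * exp 1) ^ \<Delta>)))
                            (0.2058 / (real \<kappa> + 1) ^ \<Delta>)"
  shows "\<exists>K. 0 < K \<and> K \<le> 1 \<and> K * (1 + real \<kappa> * (21/20) * K) \<le> 1 \<and> 2 * R \<le> K ^ \<Delta>"
proof (cases "2 * R \<le> (1 / (real \<kappa> + 1)) ^ \<Delta>")
  case True
  define k where "k = real \<kappa>"
  have k: "k = 0 \<or> k \<ge> 1" unfolding k_def by (cases \<kappa>) auto
  have "1 / (k + 1) * (1 + k * (21/20) * (1 / (k + 1))) \<le> 1"
  proof -
    have "k + 1 + k * (21/20) \<le> (k + 1) * (k + 1)" using k by (auto simp: algebra_simps)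
    hence "(k + 1 + k * (21/20)) / ((k+1)*(k+1)) \<le> 1" using k by (subst divide_le_eq) auto
    moreover have "1 / (k + 1) * (1 + k * (21/20) * (1 / (k + 1))) = (k + 1 + k * (21/20)) / ((k+1)*(k+1))"
      using k by (auto simp: field_simps)
    ultimately show ?thesis by simp
  qed
  thus ?thesis using True by (intro exI[of _ "1 / (real \<kappa> + 1)"]) (auto simp: k_def)
next
  case False
  define A where "A = inverse (2 * sqrt (exp 1)) * inverse (sqrt ((real \<Delta> * real \<kappa> * exp 1) ^ \<Delta>))"
  have B: "0.2058 / (real \<kappa> + 1) ^ \<Delta> < R"
  proof -
    have "(1 / (real \<kappa> + 1)) ^ \<Delta> = 1 / (real \<kappa> + 1) ^ \<Delta>" by (simp add: power_divide)
    moreover have "0.2058 / (real \<kappa> + 1) ^ \<Delta> \<le> (1/2) * (1 / (real \<kappa> + 1) ^ \<Delta>)"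
      using zero_less_power[of "real \<kappa> + 1" \<Delta>] by (simp add: divide_simps)
    ultimately show ?thesis using False by linarith
  qed
  hence RA: "R \<le> A" using Rle by (auto simp: A_def)
  have D1: "\<Delta> \<ge> 1"
  proof (rule ccontr)
    assume "\<not> ?thesis" hence "\<Delta> = 0" by simp
    hence "A = inverse (2 * sqrt (exp 1))" by (simp add: A_def)
    hence "2 * A = inverse (sqrt (exp 1))" by (simp add: inverse_mult_distrib)
    moreover have "sqrt (exp 1) \<ge> 1" by simp
    ultimately have "2 * A \<le> 1" by (simp add: inverse_le_1_iff)
    thus False using False RA \<open>\<Delta> = 0\<close> by simp
  qed
  have k1: "\<kappa> \<ge> 1"
  proof (rule ccontr)
    assume "\<not> ?thesis" hence "\<kappa> = 0" by simp
    hence "A = 0" using D1 by (simp add: A_def)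
    hence "R = 0" using RA R0 by simp
    thus False using False by simp
  qed
  define X where "X = real \<Delta> * real \<kappa> * exp 1"
  have X1: "real \<Delta> * real \<kappa> \<ge> 1" proof -
    have "1 \<le> \<Delta> * \<kappa>" using D1 k1 by (simp add: one_le_mult_iff)
    hence "(1::real) \<le> real (\<Delta> * \<kappa>)" by linarith
    thus ?thesis by simp
  qed
  have Xp: "X > 0" using X1 by (simp add: X_def)
  have e27: "exp (1::real) \<ge> 2.7" using e_approx_32 unfolding abs_le_iff by simp
  have A0: "A > 0" using Xp by (simp add: A_def X_def)
  define K where "K = root \<Delta> (2 * A)"
  have K0: "K > 0" using A0 D1 by (simp add: K_def)
  have KD: "K ^ \<Delta> = 2 * A" using A0 D1 by (simp add: K_def)
  have "(K^2) ^ \<Delta> = (2 * A)^2" by (metis KD power_mult mult.commute)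
  also have "\<dots> = inverse (exp 1) * inverse (X ^ \<Delta>)"
    using Xp by (simp add: A_def X_def power_mult_distrib field_simps)
  also have "\<dots> \<le> inverse (X ^ \<Delta>)" using Xp by (simp add: field_simps)
  also have "\<dots> = (inverse X) ^ \<Delta>" by (simp add: power_inverse)
  finally have K2a: "(K^2) ^ \<Delta> \<le> (inverse X) ^ \<Delta>" .
  obtain n where n: "\<Delta> = Suc n" using D1 by (cases \<Delta>) auto
  have K2: "K^2 \<le> inverse X"
    by (rule power_le_imp_le_base[of _ n]) (use K2a n Xp in auto)
  have "inverse X \<le> inverse (exp 1)" using X1 by (simp add: X_def field_simps)
  also have "\<dots> \<le> 1 / 2.7" using e27 by (simp add: field_simps)
  finally have K2': "K^2 \<le> 1/2.7" using K2 by linarith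
  have K61: "K \<le> 0.61"
  proof (rule ccontr)
    assume "\<not> ?thesis" hence "0.61 * 0.61 < K * K" by (intro mult_strict_mono) auto
    thus False using K2' by (simp add: power2_eq_square)
  qed
  have "real \<kappa> * K^2 \<le> real \<kappa> * inverse X" using K2 by (simp add: mult_left_mono)
  also have "\<dots> = inverse (real \<Delta> * exp 1)" using k1 by (simp add: X_def field_simps)
  also have "\<dots> \<le> inverse (exp 1)" using D1 by (simp add: field_simps)
  also have "\<dots> \<le> 1 / 2.7" using e27 by (simp add: field_simps)
  finally have kK: "real \<kappa> * K^2 \<le> 1/2.7" .
  have "K * (1 + real \<kappa> * (21/20) * K) = K + (21/20) * (real \<kappa> * K^2)" by (simp add: algebra_simps power2_eq_square)
  also have "\<dots> \<le> 1"
  proof -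
    have k3: "real \<kappa> * K^2 \<le> 10/27" using kK by simp
    have k4: "K \<le> 61/100" using K61 by simp
    show ?thesis using k3 k4 by linarith
  qed
  finally show ?thesis using K0 K61 KD RA by (intro exI[of _ K]) auto
qed


definition EU :: "'e set \<Rightarrow> ('e \<Rightarrow> 'v set) \<Rightarrow> 'v set \<Rightarrow> 'e set" where
  "EU E ends U = {e\<in>E. ends e \<subseteq> U}"
definition bd :: "'e set \<Rightarrow> ('e \<Rightarrow> 'v set) \<Rightarrow> 'v set \<Rightarrow> 'e set" where
  "bd E ends U = {e\<in>E. \<not> ends e \<subseteq> U \<and> ends e \<inter> U \<noteq> {}}"
definition mg :: "'e set \<Rightarrow> ('e \<Rightarrow> nat) \<Rightarrow> ('e \<Rightarrow> nat) \<Rightarrow> 'e \<Rightarrow> nat" where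
  "mg A \<sigma> \<rho> = (\<lambda>e. if e \<in> A then \<sigma> e else \<rho> e)"

lemma sum_PiE_split:
  assumes "A \<inter> B = {}"
  shows "(\<Sum>\<sigma>\<in>PiE (A \<union> B) (\<lambda>_. D). F \<sigma>) = (\<Sum>\<tau>\<in>PiE B (\<lambda>_. D). \<Sum>\<sigma>\<in>PiE A (\<lambda>_. D). F (mg B \<tau> \<sigma>))"
proof -
  have bij: "bij_betw (\<lambda>(\<tau>,\<sigma>). mg B \<tau> \<sigma>) (PiE B (\<lambda>_. D) \<times> PiE A (\<lambda>_. D)) (PiE (A \<union> B) (\<lambda>_. D))"
  proof (rule bij_betw_byWitness[where f' = "\<lambda>\<sigma>. (restrict \<sigma> B, restrict \<sigma> A)"])
    show "\<forall>a\<in>PiE B (\<lambda>_. D) \<times> PiE A (\<lambda>_. D). (\<lambda>\<sigma>. (restrict \<sigma> B, restrict \<sigma> A)) ((\<lambda>(\<tau>, \<sigma>). mg B \<tau> \<sigma>) a) = a"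
      using assms by (auto simp: mg_def PiE_iff extensional_def restrict_def fun_eq_iff)
    show "\<forall>a'\<in>PiE (A \<union> B) (\<lambda>_. D). (\<lambda>(\<tau>, \<sigma>). mg B \<tau> \<sigma>) ((\<lambda>\<sigma>. (restrict \<sigma> B, restrict \<sigma> A)) a') = a'"
      by (auto simp: mg_def PiE_iff extensional_def restrict_def fun_eq_iff)
    show "(\<lambda>(\<tau>, \<sigma>). mg B \<tau> \<sigma>) ` (PiE B (\<lambda>_. D) \<times> PiE A (\<lambda>_. D)) \<subseteq> PiE (A \<union> B) (\<lambda>_. D)"
      by (auto simp: mg_def PiE_iff extensional_def)
    show "(\<lambda>\<sigma>. (restrict \<sigma> B, restrict \<sigma> A)) ` PiE (A \<union> B) (\<lambda>_. D) \<subseteq> PiE B (\<lambda>_. D) \<times> PiE A (\<lambda>_. D)"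
      by (auto simp: PiE_iff)
  qed
  have "(\<Sum>\<tau>\<in>PiE B (\<lambda>_. D). \<Sum>\<sigma>\<in>PiE A (\<lambda>_. D). F (mg B \<tau> \<sigma>))
      = (\<Sum>(\<tau>,\<sigma>)\<in>PiE B (\<lambda>_. D) \<times> PiE A (\<lambda>_. D). F (mg B \<tau> \<sigma>))"
    by (rule sum.cartesian_product)
  also have "\<dots> = (\<Sum>\<sigma>\<in>PiE (A \<union> B) (\<lambda>_. D). F \<sigma>)"
    using sum.reindex_bij_betw[OF bij, of F] by (simp add: case_prod_unfold)
  finally show ?thesis by simp
qed

lemma sum_nz_power:
  fixes c :: real
  assumes "finite B"
  shows "(\<Sum>\<tau>\<in>PiE B (\<lambda>_. {0..\<kappa>}). c ^ card {e\<in>B. \<tau> e \<noteq> 0}) = (1 + real \<kappa> * c) ^ card B"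
proof -
  have eq1: "(\<Prod>e\<in>B. \<Sum>x\<in>{0..\<kappa>}. (if x = 0 then 1 else c)) = (\<Sum>\<tau>\<in>PiE B (\<lambda>_. {0..\<kappa>}). \<Prod>e\<in>B. (if \<tau> e = 0 then 1 else c))"
    by (rule prod_sum_PiE) (use assms in auto)
  have eq2: "(\<Sum>x\<in>{0..\<kappa>}. (if x = 0 then 1 else c)) = 1 + real \<kappa> * c"
  proof -
    have "{0..\<kappa>} = insert 0 {1..\<kappa>}" by auto
    hence "(\<Sum>x\<in>{0..\<kappa>}. (if x = 0 then 1 else c)) = 1 + (\<Sum>x\<in>{1..\<kappa>}. (if x = 0 then 1 else c))" by simp
    also have "(\<Sum>x\<in>{1..\<kappa>}. (if x = 0 then 1 else c)) = (\<Sum>x\<in>{1..\<kappa>}. c)" by (rule sum.cong) auto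
    finally show ?thesis by simp
  qed
  have eq3: "(\<Prod>e\<in>B. (if \<tau> e = 0 then 1 else c)) = c ^ card {e\<in>B. \<tau> e \<noteq> 0}" for \<tau>
  proof -
    have "(\<Prod>e\<in>B. (if \<tau> e = 0 then 1 else c)) = (\<Prod>e\<in>{e\<in>B. \<tau> e \<noteq> 0}. c)"
      using assms by (intro prod.mono_neutral_cong_right) auto
    thus ?thesis by simp
  qed
  have "(\<Sum>\<tau>\<in>PiE B (\<lambda>_. {0..\<kappa>}). c ^ card {e\<in>B. \<tau> e \<noteq> 0}) = (\<Sum>\<tau>\<in>PiE B (\<lambda>_. {0..\<kappa>}). \<Prod>e\<in>B. (if \<tau> e = 0 then 1 else c))"
    by (rule sum.cong[OF refl]) (rule eq3[symmetric])
  also have "\<dots> = (1 + real \<kappa> * c) ^ card B" unfolding eq1[symmetric] eq2 by simp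
  finally show ?thesis .
qed

lemma map_zero_repl: "\<forall>x\<in>set xs. f x = (0::nat) \<Longrightarrow> map f xs = replicate (length xs) 0"
  by (induct xs) auto

lemma key_ineq:
  fixes R K y :: real
  assumes "0 < K" "0 \<le> R" "0 \<le> y" "y * K \<le> 1" "2 * R \<le> K ^ D" "m + p \<le> D" "K \<le> 1"
  shows "2 * R * y ^ m \<le> K ^ p"
proof -
  have "(y * K) ^ m \<le> 1" using assms by (simp add: power_le_one)
  hence a: "y ^ m * K ^ m \<le> 1" by (simp add: power_mult_distrib)
  have "K ^ D \<le> K ^ (m + p)" using assms by (intro power_decreasing) auto
  hence b: "2 * R \<le> K ^ m * K ^ p" using assms(5) by (simp add: power_add)
  have "K ^ m * (2 * R * y ^ m) = 2 * R * (y ^ m * K ^ m)" by (simp add: algebra_simps)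
  also have "\<dots> \<le> 2 * R" using a assms(2) by (simp add: mult_left_le)
  also have "\<dots> \<le> K ^ m * K ^ p" by (rule b)
  finally show ?thesis using assms(1) by (simp add: mult_le_cancel_left)
qed

locale hol =
  fixes \<kappa> :: nat and V :: "'v set" and E :: "'e::linorder set" and ends :: "'e \<Rightarrow> 'v set"
    and \<pi> :: "'v \<Rightarrow> signature" and \<Delta> :: nat and R :: real
  assumes gr: "graph V E ends"
    and deg: "\<forall>v\<in>V. card (incident E ends v) \<le> \<Delta>"
    and ar: "\<forall>v\<in>V. arity (\<pi> v) = card (incident E ends v)"
    and f0: "\<forall>v\<in>V. sfun (\<pi> v) (zero_tuple (\<pi> v)) \<noteq> 0"
    and Rb: "\<forall>v\<in>V. \<forall>x\<in>tuples \<kappa> (arity (\<pi> v)) - {zero_tuple (\<pi> v)}.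
               cmod (sfun (\<pi> v) x) / cmod (sfun (\<pi> v) (zero_tuple (\<pi> v))) \<le> R"
    and R0: "R \<ge> 0"
begin

definition hh :: "'v \<Rightarrow> nat list \<Rightarrow> complex" where
  "hh v x = sfun (\<pi> v) x / sfun (\<pi> v) (zero_tuple (\<pi> v))"

definition Z :: "complex \<Rightarrow> 'v set \<Rightarrow> ('e \<Rightarrow> nat) \<Rightarrow> complex" where
  "Z t U \<rho> = (\<Sum>\<sigma>\<in>PiE (EU E ends U) (\<lambda>_. {0..\<kappa>}).
      (\<Prod>w\<in>U. hh w (restr E ends (mg (EU E ends U) \<sigma> \<rho>) w)) * t ^ card {e\<in>EU E ends U. \<sigma> e \<noteq> 0})"

definition nb :: "'v set \<Rightarrow> ('e \<Rightarrow> nat) \<Rightarrow> nat" where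
  "nb U \<rho> = card {e\<in>bd E ends U. \<rho> e \<noteq> 0}"

lemma finV: "finite V" and finE: "finite E" and endsV: "e \<in> E \<Longrightarrow> ends e \<subseteq> V"
  and ends2: "e \<in> E \<Longrightarrow> card (ends e) = 2"
  using gr by (auto simp: graph_def)

lemma fin_inc: "finite (incident E ends v)"
  using finE by (simp add: incident_def)

lemma ends_two: assumes "e \<in> E" obtains a b where "a \<noteq> b" "ends e = {a, b}"
  using ends2[OF assms] by (auto simp: card_2_iff)

lemma restr_cong:
  assumes "\<forall>e\<in>incident E ends v. \<sigma> e = \<sigma>' e"
  shows "restr E ends \<sigma> v = restr E ends \<sigma>' v"
  unfolding restr_def using assms fin_inc by (auto intro: map_cong)

lemma hh_zero:
  assumes "v \<in> V" "\<forall>e\<in>incident E ends v. \<sigma> e = 0"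
  shows "hh v (restr E ends \<sigma> v) = 1"
proof -
  have "restr E ends \<sigma> v = replicate (card (incident E ends v)) 0"
  proof -
    have "\<forall>x\<in>set (sorted_list_of_set (incident E ends v)). \<sigma> x = 0" using assms fin_inc by auto
    hence "map \<sigma> (sorted_list_of_set (incident E ends v)) = replicate (length (sorted_list_of_set (incident E ends v))) 0"
      by (rule map_zero_repl)
    thus ?thesis unfolding restr_def by simp
  qed
  hence "restr E ends \<sigma> v = zero_tuple (\<pi> v)" using ar assms(1) by (simp add: zero_tuple_def)
  thus ?thesis using f0 assms(1) by (simp add: hh_def)
qed

lemma hh_bound:
  assumes "v \<in> V" "\<forall>e\<in>incident E ends v. \<sigma> e \<le> \<kappa>" "e0 \<in> incident E ends v" "\<sigma> e0 \<noteq> 0"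
  shows "cmod (hh v (restr E ends \<sigma> v)) \<le> R"
proof -
  let ?x = "restr E ends \<sigma> v"
  have len: "length ?x = arity (\<pi> v)" using ar assms(1) by (simp add: restr_def)
  have "set ?x \<subseteq> {0..\<kappa>}" using assms(2) fin_inc by (auto simp: restr_def)
  hence "?x \<in> tuples \<kappa> (arity (\<pi> v))" using len by (simp add: tuples_def)
  moreover have "\<sigma> e0 \<in> set ?x" using assms(3) fin_inc by (simp add: restr_def)
  hence "?x \<noteq> zero_tuple (\<pi> v)" using assms(4) by (auto simp: zero_tuple_def)
  ultimately have "cmod (sfun (\<pi> v) ?x) / cmod (sfun (\<pi> v) (zero_tuple (\<pi> v))) \<le> R"
    using Rb assms(1) by auto
  thus ?thesis by (simp add: hh_def norm_divide)
qed

lemma EU_empty: "EU E ends {} = {}"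
proof -
  have "\<not> ends e \<subseteq> {}" if "e \<in> E" for e using ends2[OF that] by auto
  thus ?thesis by (auto simp: EU_def)
qed

lemma Z_empty: "Z t {} \<rho> = 1"
  by (simp add: Z_def EU_empty)

lemma Z_cong:
  assumes "\<forall>e\<in>bd E ends U. \<rho> e = \<rho>' e"
  shows "Z t U \<rho> = Z t U \<rho>'"
  unfolding Z_def
proof (intro sum.cong refl arg_cong2[where f="(*)"] prod.cong)
  fix \<sigma> w assume w: "w \<in> U"
  show "hh w (restr E ends (mg (EU E ends U) \<sigma> \<rho>) w) = hh w (restr E ends (mg (EU E ends U) \<sigma> \<rho>') w)"
  proof (intro arg_cong[where f="hh w"] restr_cong ballI)
    fix e assume "e \<in> incident E ends w"
    hence "e \<in> EU E ends U \<or> e \<in> bd E ends U" using w by (auto simp: incident_def EU_def bd_def)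
    thus "mg (EU E ends U) \<sigma> \<rho> e = mg (EU E ends U) \<sigma> \<rho>' e" using assms by (auto simp: mg_def bd_def EU_def)
  qed
qed

lemma decomp:
  assumes U: "U \<subseteq> V" and v: "v \<in> U"
  shows "Z t U \<rho> = (\<Sum>\<tau>\<in>PiE {e \<in> EU E ends U. v \<in> ends e} (\<lambda>_. {0..\<kappa>}).
     hh v (restr E ends (mg {e \<in> EU E ends U. v \<in> ends e} \<tau> \<rho>) v) * t ^ card {e\<in>{e \<in> EU E ends U. v \<in> ends e}. \<tau> e \<noteq> 0}
     * Z t (U - {v}) (mg {e \<in> EU E ends U. v \<in> ends e} \<tau> \<rho>))"
proof -
  define Ev where "Ev = {e \<in> EU E ends U. v \<in> ends e}"
  define A where "A = EU E ends (U - {v})"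
  have AB: "EU E ends U = A \<union> Ev" and AB0: "A \<inter> Ev = {}"
    by (auto simp: A_def Ev_def EU_def)
  have finU: "finite U" using U finV finite_subset by blast
  have finA: "finite A" using finE by (simp add: A_def EU_def)
  have finEv: "finite Ev" using finE by (simp add: Ev_def EU_def)
  define G where "G = (\<lambda>\<sigma>. (\<Prod>w\<in>U. hh w (restr E ends (mg (EU E ends U) \<sigma> \<rho>) w)) * t ^ card {e\<in>EU E ends U. \<sigma> e \<noteq> 0})"
  have "Z t U \<rho> = (\<Sum>\<sigma>\<in>PiE (A \<union> Ev) (\<lambda>_. {0..\<kappa>}). G \<sigma>)"
    by (simp add: Z_def G_def AB)
  also have "\<dots> = (\<Sum>\<tau>\<in>PiE Ev (\<lambda>_. {0..\<kappa>}). \<Sum>\<sigma>\<in>PiE A (\<lambda>_. {0..\<kappa>}). G (mg Ev \<tau> \<sigma>))"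
    by (rule sum_PiE_split[OF AB0])
  also have "\<dots> = (\<Sum>\<tau>\<in>PiE Ev (\<lambda>_. {0..\<kappa>}).
     hh v (restr E ends (mg Ev \<tau> \<rho>) v) * t ^ card {e\<in>Ev. \<tau> e \<noteq> 0} * Z t (U - {v}) (mg Ev \<tau> \<rho>))"
  proof (rule sum.cong[OF refl])
    fix \<tau> assume \<tau>: "\<tau> \<in> PiE Ev (\<lambda>_. {0..\<kappa>})"
    have "G (mg Ev \<tau> \<sigma>) = hh v (restr E ends (mg Ev \<tau> \<rho>) v) * t ^ card {e\<in>Ev. \<tau> e \<noteq> 0} *
        ((\<Prod>w\<in>U - {v}. hh w (restr E ends (mg A \<sigma> (mg Ev \<tau> \<rho>)) w)) * t ^ card {e\<in>A. \<sigma> e \<noteq> 0})" for \<sigma>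
    proof -
      have f1: "mg (EU E ends U) (mg Ev \<tau> \<sigma>) \<rho> = mg A \<sigma> (mg Ev \<tau> \<rho>)"
        using AB AB0 by (auto simp: mg_def fun_eq_iff)
      have f2: "restr E ends (mg A \<sigma> (mg Ev \<tau> \<rho>)) v = restr E ends (mg Ev \<tau> \<rho>) v"
        by (rule restr_cong) (auto simp: mg_def A_def EU_def incident_def)
      have f3: "{e\<in>EU E ends U. mg Ev \<tau> \<sigma> e \<noteq> 0} = {e\<in>A. \<sigma> e \<noteq> 0} \<union> {e\<in>Ev. \<tau> e \<noteq> 0}"
        using AB AB0 by (auto simp: mg_def)
      have f4: "card ({e\<in>A. \<sigma> e \<noteq> 0} \<union> {e\<in>Ev. \<tau> e \<noteq> 0}) = card {e\<in>A. \<sigma> e \<noteq> 0} + card {e\<in>Ev. \<tau> e \<noteq> 0}"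
        using finA finEv AB0 by (intro card_Un_disjoint) auto
      show ?thesis unfolding G_def f1 f3 f4 prod.remove[OF finU v] f2 power_add
        by (simp add: algebra_simps)
    qed
    hence "(\<Sum>\<sigma>\<in>PiE A (\<lambda>_. {0..\<kappa>}). G (mg Ev \<tau> \<sigma>)) = hh v (restr E ends (mg Ev \<tau> \<rho>) v) * t ^ card {e\<in>Ev. \<tau> e \<noteq> 0} *
        (\<Sum>\<sigma>\<in>PiE A (\<lambda>_. {0..\<kappa>}). (\<Prod>w\<in>U - {v}. hh w (restr E ends (mg A \<sigma> (mg Ev \<tau> \<rho>)) w)) * t ^ card {e\<in>A. \<sigma> e \<noteq> 0})"
      by (simp add: sum_distrib_left)
    thus "(\<Sum>\<sigma>\<in>PiE A (\<lambda>_. {0..\<kappa>}). G (mg Ev \<tau> \<sigma>)) = hh v (restr E ends (mg Ev \<tau> \<rho>) v) * t ^ card {e\<in>Ev. \<tau> e \<noteq> 0} * Z t (U - {v}) (mg Ev \<tau> \<rho>)"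
      by (simp add: Z_def A_def)
  qed
  finally show ?thesis by (simp add: Ev_def)
qed

definition Ev :: "'v set \<Rightarrow> 'v \<Rightarrow> 'e set" where
  "Ev U v = {e \<in> EU E ends U. v \<in> ends e}"

definition Tm :: "complex \<Rightarrow> 'v set \<Rightarrow> 'v \<Rightarrow> ('e \<Rightarrow> nat) \<Rightarrow> ('e \<Rightarrow> nat) \<Rightarrow> complex" where
  "Tm t U v \<rho> \<tau> = hh v (restr E ends (mg (Ev U v) \<tau> \<rho>) v) * t ^ card {e\<in>Ev U v. \<tau> e \<noteq> 0}
     * Z t (U - {v}) (mg (Ev U v) \<tau> \<rho>)"

lemma decomp2: "U \<subseteq> V \<Longrightarrow> v \<in> U \<Longrightarrow> Z t U \<rho> = (\<Sum>\<tau>\<in>PiE (Ev U v) (\<lambda>_. {0..\<kappa>}). Tm t U v \<rho> \<tau>)"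
  unfolding Tm_def Ev_def by (rule decomp)

lemma fin_Ev: "finite (Ev U v)" using finE by (simp add: Ev_def EU_def)
lemma fin_bd: "finite (bd E ends U)" using finE by (simp add: bd_def)

lemma Ev_inc: "Ev U v \<subseteq> incident E ends v" by (auto simp: Ev_def EU_def incident_def)

lemma nb_split_set:
  assumes v: "v \<in> U"
  shows "{e\<in>bd E ends (U - {v}). mg (Ev U v) \<tau> \<rho> e \<noteq> 0}
       = {e\<in>bd E ends U. \<rho> e \<noteq> 0 \<and> v \<notin> ends e} \<union> {e\<in>Ev U v. \<tau> e \<noteq> 0}"
proof (intro equalityI subsetI)
  fix e assume "e \<in> {e\<in>bd E ends (U - {v}). mg (Ev U v) \<tau> \<rho> e \<noteq> 0}"
  hence e: "e \<in> E" "\<not> ends e \<subseteq> U - {v}" "ends e \<inter> (U - {v}) \<noteq> {}" "mg (Ev U v) \<tau> \<rho> e \<noteq> 0"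
    by (auto simp: bd_def)
  obtain a b where ab: "a \<noteq> b" "ends e = {a, b}" using ends_two[OF e(1)] by blast
  show "e \<in> {e\<in>bd E ends U. \<rho> e \<noteq> 0 \<and> v \<notin> ends e} \<union> {e\<in>Ev U v. \<tau> e \<noteq> 0}"
  proof (cases "ends e \<subseteq> U")
    case True
    hence "e \<in> Ev U v" using e ab by (auto simp: Ev_def EU_def)
    thus ?thesis using e(4) by (auto simp: mg_def)
  next
    case False
    hence "e \<notin> Ev U v" by (auto simp: Ev_def EU_def)
    moreover have "v \<notin> ends e" using False e(3) ab v by auto
    ultimately show ?thesis using e False by (auto simp: mg_def bd_def)
  qed
next
  fix e assume "e \<in> {e\<in>bd E ends U. \<rho> e \<noteq> 0 \<and> v \<notin> ends e} \<union> {e\<in>Ev U v. \<tau> e \<noteq> 0}"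
  thus "e \<in> {e\<in>bd E ends (U - {v}). mg (Ev U v) \<tau> \<rho> e \<noteq> 0}"
  proof
    assume "e \<in> {e\<in>bd E ends U. \<rho> e \<noteq> 0 \<and> v \<notin> ends e}"
    moreover hence "e \<notin> Ev U v" by (auto simp: Ev_def)
    ultimately show ?thesis by (auto simp: bd_def mg_def)
  next
    assume e: "e \<in> {e\<in>Ev U v. \<tau> e \<noteq> 0}"
    hence e1: "e \<in> E" "ends e \<subseteq> U" "v \<in> ends e" by (auto simp: Ev_def EU_def)
    obtain a b where ab: "a \<noteq> b" "ends e = {a, b}" using ends_two[OF e1(1)] by blast
    have "ends e \<inter> (U - {v}) \<noteq> {}" using e1 ab by auto
    thus ?thesis using e e1 by (auto simp: bd_def mg_def)
  qed
qed

lemma nb_split: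
  assumes "v \<in> U"
  shows "nb (U - {v}) (mg (Ev U v) \<tau> \<rho>) = card {e\<in>bd E ends U. \<rho> e \<noteq> 0 \<and> v \<notin> ends e} + card {e\<in>Ev U v. \<tau> e \<noteq> 0}"
  unfolding nb_def nb_split_set[OF assms]
  by (rule card_Un_disjoint) (use finE in \<open>auto simp: bd_def Ev_def EU_def\<close>)

lemma nb_split2:
  "nb U \<rho> = card {e\<in>bd E ends U. \<rho> e \<noteq> 0 \<and> v \<notin> ends e} + card {e\<in>bd E ends U. \<rho> e \<noteq> 0 \<and> v \<in> ends e}"
proof -
  have "{e\<in>bd E ends U. \<rho> e \<noteq> 0} = {e\<in>bd E ends U. \<rho> e \<noteq> 0 \<and> v \<notin> ends e} \<union> {e\<in>bd E ends U. \<rho> e \<noteq> 0 \<and> v \<in> ends e}"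
    by auto
  thus ?thesis unfolding nb_def by (simp add: card_Un_disjoint fin_bd disjoint_iff)
qed

lemma deg_split:
  assumes "v \<in> V"
  shows "card (Ev U v) + card {e\<in>bd E ends U. \<rho> e \<noteq> 0 \<and> v \<in> ends e} \<le> \<Delta>"
proof -
  have "card (Ev U v) + card {e\<in>bd E ends U. \<rho> e \<noteq> 0 \<and> v \<in> ends e}
      = card (Ev U v \<union> {e\<in>bd E ends U. \<rho> e \<noteq> 0 \<and> v \<in> ends e})"
    by (rule card_Un_disjoint[symmetric]) (use finE in \<open>auto simp: bd_def Ev_def EU_def\<close>)
  also have "\<dots> \<le> card (incident E ends v)"
    by (rule card_mono[OF fin_inc]) (auto simp: Ev_def EU_def bd_def incident_def)
  also have "\<dots> \<le> \<Delta>" using deg assms by auto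
  finally show ?thesis .
qed

lemma term_bound:
  assumes U: "U \<subseteq> V" and v: "v \<in> U"
    and IH: "\<forall>\<rho>. (\<forall>e. \<rho> e \<le> \<kappa>) \<longrightarrow> cmod (Z t (U - {v}) \<rho>) \<le> K ^ nb (U - {v}) \<rho> * N"
    and \<rho>: "\<forall>e. \<rho> e \<le> \<kappa>" and \<tau>: "\<tau> \<in> PiE (Ev U v) (\<lambda>_. {0..\<kappa>})"
    and e0: "e0 \<in> incident E ends v" "mg (Ev U v) \<tau> \<rho> e0 \<noteq> 0"
    and t: "cmod t \<le> s" and K: "K \<ge> 0"
  shows "cmod (Tm t U v \<rho> \<tau>) \<le> R * (s*K) ^ card {e\<in>Ev U v. \<tau> e \<noteq> 0} * K ^ card {e\<in>bd E ends U. \<rho> e \<noteq> 0 \<and> v \<notin> ends e} * N"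
proof -
  let ?n = "card {e\<in>Ev U v. \<tau> e \<noteq> 0}" and ?q = "card {e\<in>bd E ends U. \<rho> e \<noteq> 0 \<and> v \<notin> ends e}"
  have val: "\<forall>e. mg (Ev U v) \<tau> \<rho> e \<le> \<kappa>" using \<rho> \<tau> by (auto simp: mg_def PiE_iff)
  have vV: "v \<in> V" using U v by auto
  have h: "cmod (hh v (restr E ends (mg (Ev U v) \<tau> \<rho>) v)) \<le> R"
    using hh_bound[OF vV _ e0(1), of "mg (Ev U v) \<tau> \<rho>"] e0(2) val by blast
  have s0: "s \<ge> 0" using t norm_ge_zero order_trans by blast
  have p: "cmod (t ^ ?n) \<le> s ^ ?n" by (simp add: norm_power power_mono t)
  have z: "cmod (Z t (U - {v}) (mg (Ev U v) \<tau> \<rho>)) \<le> K ^ (?q + ?n) * N"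
    using IH val nb_split[OF v] by metis
  have "cmod (Tm t U v \<rho> \<tau>) = cmod (hh v (restr E ends (mg (Ev U v) \<tau> \<rho>) v)) * cmod (t ^ ?n) * cmod (Z t (U - {v}) (mg (Ev U v) \<tau> \<rho>))"
    by (simp add: Tm_def norm_mult)
  also have "\<dots> \<le> R * s ^ ?n * (K ^ (?q + ?n) * N)"
    by (intro mult_mono h p z) (use R0 s0 in auto)
  also have "\<dots> = R * (s*K) ^ ?n * K ^ ?q * N" by (simp add: power_add power_mult_distrib algebra_simps)
  finally show ?thesis .
qed

lemma main_ind:
  assumes t: "cmod t \<le> s" and K: "0 < K" "K \<le> 1" "K * (1 + real \<kappa> * s * K) \<le> 1" "2 * R \<le> K ^ \<Delta>"
  shows "finite U \<Longrightarrow> U \<subseteq> V \<Longrightarrow> Z t U (\<lambda>_. 0) \<noteq> 0 \<and>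
     (\<forall>\<rho>. (\<forall>e. \<rho> e \<le> \<kappa>) \<longrightarrow> cmod (Z t U \<rho>) \<le> K ^ nb U \<rho> * cmod (Z t U (\<lambda>_. 0)))"
proof (induct U rule: finite_psubset_induct)
  case (psubset U)
  show ?case
  proof (cases "U = {}")
    case True
    have "nb {} \<rho> = 0" for \<rho> by (simp add: nb_def bd_def)
    thus ?thesis using True by (simp add: Z_empty)
  next
    case False
    let ?y = "1 + real \<kappa> * s * K"
    have s0: "0 \<le> s" using t norm_ge_zero order_trans by blast
    have y0: "0 \<le> ?y" using s0 K by simp
    have yK: "?y * K \<le> 1" using K(3) by (simp add: algebra_simps)
    have IHv: "Z t (U - {v}) (\<lambda>_. 0) \<noteq> 0 \<and> (\<forall>\<rho>. (\<forall>e. \<rho> e \<le> \<kappa>) \<longrightarrow> cmod (Z t (U-{v}) \<rho>) \<le> K ^ nb (U-{v}) \<rho> * cmod (Z t (U-{v}) (\<lambda>_. 0)))"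
      if "v \<in> U" for v
      using psubset.hyps(2)[of "U - {v}"] psubset.prems that by auto
    have sumy: "(\<Sum>\<tau>\<in>PiE (Ev U v) (\<lambda>_. {0..\<kappa>}). (s*K) ^ card {e\<in>Ev U v. \<tau> e \<noteq> 0}) = ?y ^ card (Ev U v)" for v
      using sum_nz_power[OF fin_Ev[of U v], where c="s*K" and \<kappa>=\<kappa>] by (simp add: algebra_simps)
    have ratio: "cmod (Z t (U - {v}) (\<lambda>_.0)) \<le> 2 * cmod (Z t U (\<lambda>_.0))" if v: "v \<in> U" for v
    proof -
      define N where "N = cmod (Z t (U - {v}) (\<lambda>_.0))"
      define P where "P = PiE (Ev U v) (\<lambda>_. {0..\<kappa>})"
      define \<tau>0 where "\<tau>0 = restrict (\<lambda>_. 0::nat) (Ev U v)"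
      have \<tau>0P: "\<tau>0 \<in> P" by (simp add: \<tau>0_def P_def)
      have finP: "finite P" by (simp add: P_def fin_Ev finite_PiE)
      have mg0: "mg (Ev U v) \<tau>0 (\<lambda>_.0) = (\<lambda>_. 0)" by (auto simp: mg_def \<tau>0_def fun_eq_iff)
      have vV: "v \<in> V" using v psubset.prems by auto
      have T0: "Tm t U v (\<lambda>_.0) \<tau>0 = Z t (U-{v}) (\<lambda>_.0)"
        unfolding Tm_def mg0 using hh_zero[OF vV] by (simp add: \<tau>0_def)
      have Zsplit: "Z t U (\<lambda>_.0) = Z t (U-{v}) (\<lambda>_.0) + (\<Sum>\<tau>\<in>P - {\<tau>0}. Tm t U v (\<lambda>_.0) \<tau>)"
        unfolding decomp2[OF psubset.prems(1) v] P_def[symmetric] sum.remove[OF finP \<tau>0P] T0 ..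
      have tb: "cmod (Tm t U v (\<lambda>_.0) \<tau>) \<le> R * (s*K)^card{e\<in>Ev U v. \<tau> e \<noteq> 0} * N" if \<tau>: "\<tau> \<in> P - {\<tau>0}" for \<tau>
      proof -
        have "\<exists>e\<in>Ev U v. \<tau> e \<noteq> 0"
        proof (rule ccontr)
          assume "\<not> ?thesis"
          hence "\<tau> = \<tau>0" using \<tau> by (auto simp: P_def \<tau>0_def PiE_iff extensional_def fun_eq_iff)
          thus False using \<tau> by simp
        qed
        then obtain e0 where e0: "e0 \<in> Ev U v" "\<tau> e0 \<noteq> 0" by blast
        have "cmod (Tm t U v (\<lambda>_.0) \<tau>) \<le> R * (s*K) ^ card {e\<in>Ev U v. \<tau> e \<noteq> 0} * K ^ card {e\<in>bd E ends U. (0::nat) \<noteq> 0 \<and> v \<notin> ends e} * N"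
          unfolding N_def
          by (rule term_bound[OF psubset.prems(1) v conjunct2[OF IHv[OF v]] _ _ _ _ t])
             (use \<tau> e0 Ev_inc K in \<open>auto simp: P_def mg_def\<close>)
        thus ?thesis by simp
      qed
      have "cmod (\<Sum>\<tau>\<in>P - {\<tau>0}. Tm t U v (\<lambda>_.0) \<tau>) \<le> (\<Sum>\<tau>\<in>P - {\<tau>0}. R * (s*K)^card{e\<in>Ev U v. \<tau> e \<noteq> 0} * N)"
        by (rule order_trans[OF norm_sum sum_mono]) (use tb in auto)
      also have "\<dots> = R * N * ((\<Sum>\<tau>\<in>P. (s*K)^card{e\<in>Ev U v. \<tau> e \<noteq> 0}) - (s*K)^card{e\<in>Ev U v. \<tau>0 e \<noteq> 0})"
        by (simp add: sum_diff1[OF finP] \<tau>0P sum_distrib_left algebra_simps sum_distrib_right)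
      also have "\<dots> = R * N * (?y ^ card (Ev U v) - 1)"
        using sumy[of v] by (simp add: P_def \<tau>0_def)
      also have "\<dots> \<le> N / 2"
      proof -
        have "card (Ev U v) + 0 \<le> \<Delta>" using deg_split[OF vV, of U "\<lambda>_. 0"] by simp
        hence "2 * R * ?y ^ card (Ev U v) \<le> K ^ 0" by (intro key_ineq[OF K(1) R0 y0 yK K(4)]) (use K in auto)
        hence "R * (?y ^ card (Ev U v) - 1) \<le> 1/2" using R0 by (simp add: algebra_simps)
        moreover have "N \<ge> 0" by (simp add: N_def)
        ultimately show ?thesis using mult_left_mono[of "R * (?y ^ card (Ev U v) - 1)" "1/2" N] by (simp add: algebra_simps)
      qed
      finally have "cmod (\<Sum>\<tau>\<in>P - {\<tau>0}. Tm t U v (\<lambda>_.0) \<tau>) \<le> N / 2" .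
      moreover have "N - cmod (\<Sum>\<tau>\<in>P - {\<tau>0}. Tm t U v (\<lambda>_.0) \<tau>) \<le> cmod (Z t U (\<lambda>_.0))"
        unfolding Zsplit N_def by (metis norm_diff_ineq)
      ultimately show ?thesis unfolding N_def by linarith
    qed
    obtain v0 where v0: "v0 \<in> U" using False by blast
    have nz: "Z t U (\<lambda>_.0) \<noteq> 0"
    proof
      assume "Z t U (\<lambda>_.0) = 0"
      hence "cmod (Z t (U - {v0}) (\<lambda>_.0)) \<le> 0" using ratio[OF v0] by simp
      thus False using IHv[OF v0] by simp
    qed
    have bound: "cmod (Z t U \<rho>) \<le> K ^ nb U \<rho> * cmod (Z t U (\<lambda>_. 0))" if \<rho>: "\<forall>e. \<rho> e \<le> \<kappa>" for \<rho>
    proof (cases "nb U \<rho> = 0")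
      case True
      hence "{e\<in>bd E ends U. \<rho> e \<noteq> 0} = {}" using fin_bd by (simp add: nb_def)
      hence "Z t U \<rho> = Z t U (\<lambda>_.0)" by (intro Z_cong) auto
      thus ?thesis using True by simp
    next
      case False
      then obtain e0 where e0: "e0 \<in> bd E ends U" "\<rho> e0 \<noteq> 0" by (auto simp: nb_def card_gt_0_iff)
      then obtain v where v: "v \<in> U" "v \<in> ends e0" by (auto simp: bd_def)
      have vV: "v \<in> V" using v psubset.prems by auto
      define N where "N = cmod (Z t (U - {v}) (\<lambda>_.0))"
      define p where "p = card {e\<in>bd E ends U. \<rho> e \<noteq> 0 \<and> v \<in> ends e}"
      define q where "q = card {e\<in>bd E ends U. \<rho> e \<noteq> 0 \<and> v \<notin> ends e}"
      have nbqp: "nb U \<rho> = q + p" unfolding p_def q_def by (rule nb_split2)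
      have e0inc: "e0 \<in> incident E ends v" using e0 v by (auto simp: bd_def incident_def)
      have e0Ev: "e0 \<notin> Ev U v" using e0 by (auto simp: bd_def Ev_def EU_def)
      have tb: "cmod (Tm t U v \<rho> \<tau>) \<le> R * (s*K)^card{e\<in>Ev U v. \<tau> e \<noteq> 0} * K ^ q * N"
        if \<tau>: "\<tau> \<in> PiE (Ev U v) (\<lambda>_. {0..\<kappa>})" for \<tau>
        unfolding N_def q_def
        by (rule term_bound[OF psubset.prems(1) v(1) conjunct2[OF IHv[OF v(1)]] \<rho> \<tau> e0inc _ t])
           (use e0 e0Ev K in \<open>auto simp: mg_def\<close>)
      have "cmod (Z t U \<rho>) \<le> (\<Sum>\<tau>\<in>PiE (Ev U v) (\<lambda>_. {0..\<kappa>}). R * (s*K)^card{e\<in>Ev U v. \<tau> e \<noteq> 0} * K ^ q * N)"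
        unfolding decomp2[OF psubset.prems(1) v(1)]
        by (rule order_trans[OF norm_sum sum_mono]) (use tb in auto)
      also have "\<dots> = (R * K ^ q * N) * (\<Sum>\<tau>\<in>PiE (Ev U v) (\<lambda>_. {0..\<kappa>}). (s*K)^card{e\<in>Ev U v. \<tau> e \<noteq> 0})"
        unfolding sum_distrib_left by (rule sum.cong) (simp_all add: mult_ac)
      also have "\<dots> = R * K ^ q * N * ?y ^ card (Ev U v)"
        unfolding sumy ..
      also have "\<dots> \<le> R * K ^ q * (2 * cmod (Z t U (\<lambda>_.0))) * ?y ^ card (Ev U v)"
        unfolding N_def using ratio[OF v(1)] R0 K y0
        by (intro mult_right_mono mult_left_mono) auto
      also have "\<dots> = (2 * R * ?y ^ card (Ev U v)) * K ^ q * cmod (Z t U (\<lambda>_.0))" by (simp add: algebra_simps)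
      also have "\<dots> \<le> K ^ p * K ^ q * cmod (Z t U (\<lambda>_.0))"
      proof -
        have "card (Ev U v) + p \<le> \<Delta>" unfolding p_def by (rule deg_split[OF vV])
        hence "2 * R * ?y ^ card (Ev U v) \<le> K ^ p" by (intro key_ineq[OF K(1) R0 y0 yK K(4)]) (use K in auto)
        thus ?thesis using K by (intro mult_right_mono) auto
      qed
      also have "\<dots> = K ^ nb U \<rho> * cmod (Z t U (\<lambda>_.0))" by (simp add: nbqp power_add algebra_simps)
      finally show ?thesis .
    qed
    show ?thesis using nz bound by blast
  qed
qed


lemma EU_V: "EU E ends V = E" using endsV by (auto simp: EU_def)

lemma f0prod: "(\<Prod>v\<in>V. sfun (\<pi> v) (zero_tuple (\<pi> v))) \<noteq> 0"
  using f0 finV by simp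

lemma P_eq: "holant_poly \<kappa> V E ends \<pi> t = Z t V (\<lambda>_. 0)"
proof -
  have "holant_poly \<kappa> V E ends \<pi> t = (\<Sum>\<sigma>\<in>PiE E (\<lambda>_. {0..\<kappa>}).
      weight V E ends \<pi> \<sigma> / (\<Prod>v\<in>V. sfun (\<pi> v) (zero_tuple (\<pi> v))) * t ^ card {e\<in>E. \<sigma> e \<noteq> 0})"
    unfolding holant_poly_def assignments_def sum_divide_distrib by (rule sum.cong) auto
  also have "\<dots> = Z t V (\<lambda>_. 0)"
    unfolding Z_def EU_V
  proof (rule sum.cong[OF refl])
    fix \<sigma> assume "\<sigma> \<in> PiE E (\<lambda>_. {0..\<kappa>})"
    have "weight V E ends \<pi> \<sigma> / (\<Prod>v\<in>V. sfun (\<pi> v) (zero_tuple (\<pi> v))) = (\<Prod>w\<in>V. hh w (restr E ends \<sigma> w))"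
      unfolding weight_def hh_def by (simp add: prod_dividef)
    also have "\<dots> = (\<Prod>w\<in>V. hh w (restr E ends (mg E \<sigma> (\<lambda>_. 0)) w))"
      by (intro prod.cong refl arg_cong[where f="hh _"] restr_cong) (auto simp: mg_def incident_def)
    finally show "weight V E ends \<pi> \<sigma> / (\<Prod>v\<in>V. sfun (\<pi> v) (zero_tuple (\<pi> v))) * t ^ card {e\<in>E. \<sigma> e \<noteq> 0}
        = (\<Prod>w\<in>V. hh w (restr E ends (mg E \<sigma> (\<lambda>_. 0)) w)) * t ^ card {e\<in>E. \<sigma> e \<noteq> 0}" by simp
  qed
  finally show ?thesis .
qed

lemma P0: "holant_poly \<kappa> V E ends \<pi> 0 = 1"
proof -
  define P where "P = PiE E (\<lambda>_. {0..\<kappa>::nat})"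
  define \<sigma>0 where "\<sigma>0 = restrict (\<lambda>_. 0::nat) E"
  have \<sigma>0P: "\<sigma>0 \<in> P" by (simp add: \<sigma>0_def P_def)
  have finP: "finite P" by (simp add: P_def finE finite_PiE)
  define G where "G = (\<lambda>\<sigma>. (\<Prod>w\<in>V. hh w (restr E ends (mg E \<sigma> (\<lambda>_. 0)) w)) * (0::complex) ^ card {e\<in>E. \<sigma> e \<noteq> 0})"
  have "holant_poly \<kappa> V E ends \<pi> 0 = sum G P" unfolding P_eq Z_def EU_V G_def P_def ..
  also have "\<dots> = G \<sigma>0 + sum G (P - {\<sigma>0})" by (rule sum.remove[OF finP \<sigma>0P])
  also have "sum G (P - {\<sigma>0}) = 0"
  proof (rule sum.neutral, rule ballI)
    fix \<sigma> assume \<sigma>: "\<sigma> \<in> P - {\<sigma>0}"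
    have "\<exists>e\<in>E. \<sigma> e \<noteq> 0"
    proof (rule ccontr)
      assume "\<not> ?thesis"
      hence "\<sigma> = \<sigma>0" using \<sigma> by (auto simp: P_def \<sigma>0_def PiE_iff extensional_def fun_eq_iff)
      thus False using \<sigma> by simp
    qed
    hence "card {e\<in>E. \<sigma> e \<noteq> 0} \<noteq> 0" using finE by auto
    thus "G \<sigma> = 0" by (simp add: G_def)
  qed
  also have "G \<sigma>0 = 1"
  proof -
    have m0: "mg E \<sigma>0 (\<lambda>_. 0) = (\<lambda>_. 0)" by (auto simp: mg_def \<sigma>0_def fun_eq_iff)
    have c0: "{e\<in>E. \<sigma>0 e \<noteq> 0} = {}" by (auto simp: \<sigma>0_def)
    show ?thesis unfolding G_def m0 c0 using hh_zero by simp
  qed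
  finally show ?thesis by simp
qed

lemma holo: "(\<lambda>t. holant_poly \<kappa> V E ends \<pi> t) holomorphic_on UNIV"
  unfolding P_eq Z_def by (intro holomorphic_intros)

lemma holant_eq: "holant \<kappa> V E ends \<pi> = holant_poly \<kappa> V E ends \<pi> 1 * (\<Prod>v\<in>V. sfun (\<pi> v) (zero_tuple (\<pi> v)))"
  using f0prod unfolding holant_poly_def holant_def by simp

end

lemma r_bound:
  assumes "finite F" "s \<in> F" "x \<in> tuples \<kappa> (arity s) - {zero_tuple s}"
  shows "cmod (sfun s x) / cmod (sfun s (zero_tuple s)) \<le> r_set \<kappa> F"
proof -
  have ft: "finite (tuples \<kappa> d)" for d
  proof -
    have "tuples \<kappa> d = {xs. set xs \<subseteq> {0..\<kappa>} \<and> length xs = d}" by (auto simp: tuples_def)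
    thus ?thesis using finite_lists_length_eq[of "{0..\<kappa>}" d] by simp
  qed
  have "cmod (sfun s x) / cmod (sfun s (zero_tuple s)) \<le> r_sig \<kappa> s"
    unfolding r_sig_def by (rule Max_ge) (use assms(3) ft in auto)
  also have "\<dots> \<le> r_set \<kappa> F"
    unfolding r_set_def by (rule Max_ge) (use assms(1,2) in auto)
  finally show ?thesis .
qed

lemma r_set_nonneg: "finite F \<Longrightarrow> 0 \<le> r_set \<kappa> F"
  unfolding r_set_def by (rule Max_ge) auto

theorem mainTheorem10:
  fixes \<kappa> \<Delta> :: nat
    and F :: "signature set"
    and V :: "'v set" and E :: "'e::linorder set" and ends :: "'e \<Rightarrow> 'v set"
    and \<pi> :: "'v \<Rightarrow> signature"
  assumes "finite F" and "F \<subseteq> F0"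
    and "r_set \<kappa> F \<le> max (inverse (2 * sqrt (exp 1)) * inverse (sqrt ((real \<Delta> * real \<kappa> * exp 1) ^ \<Delta>)))
                            (0.2058 / (real \<kappa> + 1) ^ \<Delta>)"
    and "graph V E ends"
    and "\<forall>v\<in>V. card (incident E ends v) \<le> \<Delta>"
    and "\<forall>v\<in>V. \<pi> v \<in> F \<and> arity (\<pi> v) = card (incident E ends v)"
  shows "holant \<kappa> V E ends \<pi> \<noteq> 0
    \<and> summable (\<lambda>n. norm (taylor_coeff (\<lambda>t. Ln (holant_poly \<kappa> V E ends \<pi> t)) n))"
proof -
  have R0: "0 \<le> r_set \<kappa> F" by (rule r_set_nonneg[OF assms(1)])
  interpret hol \<kappa> V E ends \<pi> \<Delta> "r_set \<kappa> F"
  proof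
    show "graph V E ends" by (rule assms(4))
    show "\<forall>v\<in>V. card (incident E ends v) \<le> \<Delta>" by (rule assms(5))
    show "\<forall>v\<in>V. arity (\<pi> v) = card (incident E ends v)" using assms(6) by auto
    show "\<forall>v\<in>V. sfun (\<pi> v) (zero_tuple (\<pi> v)) \<noteq> 0" using assms(2,6) by (auto simp: F0_def)
    show "\<forall>v\<in>V. \<forall>x\<in>tuples \<kappa> (arity (\<pi> v)) - {zero_tuple (\<pi> v)}.
           cmod (sfun (\<pi> v) x) / cmod (sfun (\<pi> v) (zero_tuple (\<pi> v))) \<le> r_set \<kappa> F"
      using r_bound[OF assms(1)] assms(6) by blast
    show "0 \<le> r_set \<kappa> F" by (rule R0)
  qed
  obtain K where K: "0 < K" "K \<le> 1" "K * (1 + real \<kappa> * (21/20) * K) \<le> 1" "2 * r_set \<kappa> F \<le> K ^ \<Delta>"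
    using K_exists[OF R0 assms(3)] by blast
  have nz: "\<forall>t. cmod t \<le> 21/20 \<longrightarrow> holant_poly \<kappa> V E ends \<pi> t \<noteq> 0"
  proof (intro allI impI)
    fix t :: complex assume t: "cmod t \<le> 21/20"
    show "holant_poly \<kappa> V E ends \<pi> t \<noteq> 0"
      unfolding P_eq using main_ind[OF t K finV order_refl] by blast
  qed
  have "holant \<kappa> V E ends \<pi> \<noteq> 0"
    unfolding holant_eq using nz f0prod by simp
  moreover have "summable (\<lambda>n. norm ((deriv ^^ n) (\<lambda>t. Ln (holant_poly \<kappa> V E ends \<pi> t)) 0 / of_nat (fact n)))"
    by (rule analytic_part[OF holo _ nz P0]) simp
  ultimately show ?thesis unfolding taylor_coeff_def by blast
qed

end
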